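(* Let $q\ge2$, $n\ge1$, and ${\boldsymbol y}\in\Sigma_q^{n+1}$ with run length profile $(r_1,\dots,r_{\rho({\boldsymbol y})})$. Then $\mathsf{H}^{\mathsf{In}}_{1\text{-}\mathsf{Ins}}({\boldsymbol y})$ is invariant to permutations of the run length profile of ${\boldsymbol y}$ and $$\mathsf{H}^{\mathsf{In}}_{1\text{-}\mathsf{Ins}}({\boldsymbol y})=\log_2(n+1)-\frac{1}{n+1}\sum_{i=1}^{\rho({\boldsymbol y})}r_i\log_2 r_i.$$
   Context: $\Sigma_q=\{0,1,\dots,q-1\}$. For sequences ${\boldsymbol x}$ of length $\ell$ and ${\boldsymbol y}$ of length $N\ge\ell$, $\omega_{{\boldsymbol x}}({\boldsymbol y})$ is the number of index tuples $1\le i_1<\dots<i_\ell\le N$ with $y_{i_j}=x_j$. The $k$-insertion channel with input length $n$ maps ${\boldsymbol x}\in\Sigma_q^n$ to ${\boldsymbol y}\in\Sigma_q^{n+k}$ with probability $\omega_{{\boldsymbol x}}({\boldsymbol y})/(\binom{n+k}{k}q^k)$. Under uniform transmission $X$ is uniform on $\Sigma_q^n$ and $\mathsf{H}^{\mathsf{In}}_{k\text{-}\mathsf{Ins}}({\boldsymbol y})=H(X\mid Y={\boldsymbol y})$ (base-2 logarithms), with posterior $P({\boldsymbol x}\mid {\boldsymbol y})=\Pr\{{\boldsymbol y}\mid{\boldsymbol x}\}/\sum_{{\boldsymbol x}'}\Pr\{{\boldsymbol y}\mid{\boldsymbol x}'\}$. A run is a maximal block of identical consecutive symbols; $\rho({\boldsymbol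 y})$ is the number of runs and the run length profile is the vector of run lengths from left to right. Convention $0\log 0$ does not arise since $r_i\ge1$. *)

theory Defs
  imports Complex_Main "HOL-Library.Multiset"
begin

definition words :: "nat \<Rightarrow> nat \<Rightarrow> nat list set" where
  "words q n = {x. length x = n \<and> set x \<subseteq> {..<q}}"

text \<open>omega_x(y): number of index sets i_1<...<i_l (0-based here) with y_{i_j} = x_j.\<close>
definition omega :: "nat list \<Rightarrow> nat list \<Rightarrow> nat" where
  "omega x y = card {I. I \<subseteq> {..<length y} \<and> card I = length x \<and>
       (\<forall>j<length x. y ! (sorted_list_of_set I ! j) = x ! j)}"

text \<open>Transition probability of the k-insertion channel with input length n.\<close>
definition ins_prob :: "nat \<Rightarrow> nat \<Rightarrow> nat \<Rightarrow> nat list \<Rightarrow> nat list \<Rightarrow> real" where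
  "ins_prob q n k x y = real (omega x y) / (real ((n + k) choose k) * real q ^ k)"

text \<open>Posterior P(x | y) under uniform input on \<Sigma>_q^n.\<close>
definition posterior :: "nat \<Rightarrow> nat \<Rightarrow> nat \<Rightarrow> nat list \<Rightarrow> nat list \<Rightarrow> real" where
  "posterior q n k y x = ins_prob q n k x y / (\<Sum>x'\<in>words q n. ins_prob q n k x' y)"

definition H_ins :: "nat \<Rightarrow> nat \<Rightarrow> nat \<Rightarrow> nat list \<Rightarrow> real" where
  "H_ins q n k y = (\<Sum>x\<in>words q n. let p = posterior q n k y x in
       if p = 0 then 0 else - p * log 2 p)"

fun rlp :: "'a list \<Rightarrow> nat list" where
  "rlp [] = []"
| "rlp [a] = [1]"
| "rlp (a # b # xs) = (let r = rlp (b # xs) in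
     if a = b then Suc (hd r) # tl r else 1 # r)"

definition rho :: "'a list \<Rightarrow> nat" where
  "rho y = length (rlp y)"

end

theory Submission imports Defs begin

definition dl :: "nat \<Rightarrow> 'a list \<Rightarrow> 'a list" where
  "dl i y = take i y @ drop (Suc i) y"

definition cnt :: "'a list \<Rightarrow> 'a list \<Rightarrow> nat" where
  "cnt y x = card {i. i < length y \<and> dl i y = x}"

definition DS :: "'a list \<Rightarrow> 'a list set" where
  "DS y = (\<lambda>i. dl i y) ` {..<length y}"

lemma dl_0[simp]: "dl 0 (a # ys) = ys" by (simp add: dl_def)
lemma dl_Suc[simp]: "dl (Suc i) (a # ys) = a # dl i ys" by (simp add: dl_def)

lemma card_Suc_split:
  "card {i. i < Suc m \<and> P i} = (if P 0 then 1 else 0) + card {i. i < m \<and> P (Suc i)}"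
proof -
  have e: "{i. i < Suc m \<and> P i} = (if P 0 then {0} else {}) \<union> Suc ` {i. i < m \<and> P (Suc i)}"
    by (auto simp: less_Suc_eq_0_disj)
  have "card ((if P 0 then {0} else {}) \<union> Suc ` {i. i < m \<and> P (Suc i)})
      = card (if P 0 then {0::nat} else {}) + card (Suc ` {i. i < m \<and> P (Suc i)})"
    by (rule card_Un_disjoint) auto
  also have "card (Suc ` {i. i < m \<and> P (Suc i)}) = card {i. i < m \<and> P (Suc i)}"
    by (rule card_image) auto
  finally show ?thesis using e by simp
qed

lemma cnt_Cons: "cnt (a # ys) x = (if ys = x then 1 else 0) + card {i. i < length ys \<and> a # dl i ys = x}"
  unfolding cnt_def by (simp add: card_Suc_split)

lemma cnt_Cons_same: "cnt (a # ys) (a # x) = (if ys = a # x then 1 else 0) + cnt ys x"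
  by (subst cnt_Cons) (simp add: cnt_def)

lemma cnt_Cons_diff: "a \<noteq> b \<Longrightarrow> cnt (a # b # zs) (a # x) = cnt (b # zs) x"
  by (subst cnt_Cons_same) auto

lemma rlp_ne: "y \<noteq> [] \<Longrightarrow> rlp y \<noteq> []"
  by (induction y rule: rlp.induct) (auto simp: Let_def)

lemma sum_rlp: "sum_list (rlp y) = length y"
proof (induction y rule: rlp.induct)
  case (3 a b xs)
  have "rlp (b # xs) \<noteq> []" by (rule rlp_ne) simp
  then obtain h t where "rlp (b # xs) = h # t" by (cases "rlp (b # xs)") auto
  with 3 show ?case by (simp add: Let_def)
qed simp_all

lemma DS_single: "DS [a] = {[]}" by (auto simp: DS_def dl_def)
lemma cnt_single: "cnt [a] [] = 1" by (simp add: cnt_def dl_def)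

lemma cnt_tl: "y \<noteq> [] \<Longrightarrow> cnt y (tl y) = hd (rlp y)"
proof (induction y rule: rlp.induct)
  case (2 a)
  then show ?case by (simp add: cnt_def dl_def)
next
  case (3 a b xs)
  show ?case
  proof (cases "a = b")
    case True
    then show ?thesis using 3 by (simp add: cnt_Cons_same Let_def)
  next
    case False
    have "card {i. i < length (b # xs) \<and> a # dl i (b # xs) = b # xs} = 0"
      using False by simp
    then show ?thesis using False by (simp add: cnt_Cons Let_def del: length_Cons)
  qed
qed simp

lemma DS_Cons: "DS (a # ys) = insert ys ((#) a ` DS ys)"
  unfolding DS_def by (auto simp: lessThan_Suc_eq_insert_0 image_image)

lemma DS_tl: "y \<noteq> [] \<Longrightarrow> tl y \<in> DS y"
  by (cases y) (auto simp: DS_Cons)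

lemma finite_DS[simp]: "finite (DS y)" by (simp add: DS_def)

lemma main_mset: "y \<noteq> [] \<Longrightarrow> image_mset (cnt y) (mset_set (DS y)) = mset (rlp y)"
proof (induction y rule: rlp.induct)
  case (2 a)
  then show ?case by (simp add: DS_single cnt_single)
next
  case (3 a b zs)
  let ?r = "rlp (b # zs)"
  have IH: "image_mset (cnt (b # zs)) (mset_set (DS (b # zs))) = mset ?r" using 3 by simp
  show ?case
  proof (cases "a = b")
    case False
    have nin: "b # zs \<notin> (#) a ` DS (b # zs)" using False by auto
    have "image_mset (cnt (a # b # zs)) (mset_set (DS (a # b # zs)))
       = add_mset (cnt (a # b # zs) (b # zs)) (image_mset (cnt (a # b # zs)) (mset_set ((#) a ` DS (b # zs))))"
      using nin by (simp add: DS_Cons)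
    also have "cnt (a # b # zs) (b # zs) = 1" using False by (simp add: cnt_Cons)
    also have "image_mset (cnt (a # b # zs)) (mset_set ((#) a ` DS (b # zs)))
        = image_mset (cnt (a # b # zs) \<circ> (#) a) (mset_set (DS (b # zs)))"
      by (simp add: image_mset_mset_set[symmetric] inj_on_def multiset.map_comp)
    also have "cnt (a # b # zs) \<circ> (#) a = cnt (b # zs)"
      using False by (auto simp: cnt_Cons_diff)
    finally show ?thesis using IH False by (simp add: Let_def)
  next
    case True
    have ins: "b # zs \<in> (#) a ` DS (b # zs)" using True DS_tl[of "b # zs"] by auto
    have zin: "zs \<in> DS (b # zs)" using DS_tl[of "b # zs"] by simp
    have f: "cnt (a # b # zs) \<circ> (#) a = (\<lambda>x. (if zs = x then 1 else 0) + cnt (b # zs) x)"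
      using True by (auto simp: cnt_Cons_same)
    have "image_mset (cnt (a # b # zs)) (mset_set (DS (a # b # zs)))
        = image_mset (cnt (a # b # zs) \<circ> (#) a) (mset_set (DS (b # zs)))"
    proof -
      have "DS (a # b # zs) = (#) a ` DS (b # zs)"
        using ins by (simp only: DS_Cons[of a "b # zs"] insert_absorb)
      moreover have "mset_set ((#) a ` DS (b # zs)) = image_mset ((#) a) (mset_set (DS (b # zs)))"
        by (rule image_mset_mset_set[symmetric]) (simp add: inj_on_def)
      ultimately show ?thesis by (simp add: multiset.map_comp)
    qed
    also have "\<dots> = image_mset (\<lambda>x. (if zs = x then 1 else 0) + cnt (b # zs) x)
        (add_mset zs (mset_set (DS (b # zs) - {zs})))"
      using zin f by (simp add: mset_set.remove)
    also have "\<dots> = add_mset (Suc (cnt (b # zs) zs)) (image_mset (cnt (b # zs)) (mset_set (DS (b # zs) - {zs})))"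
      by (auto intro!: image_mset_cong)
    finally have A: "image_mset (cnt (a # b # zs)) (mset_set (DS (a # b # zs)))
       = add_mset (Suc (cnt (b # zs) zs)) (image_mset (cnt (b # zs)) (mset_set (DS (b # zs) - {zs})))" .
    have "mset ?r = add_mset (cnt (b # zs) zs) (image_mset (cnt (b # zs)) (mset_set (DS (b # zs) - {zs})))"
      using IH zin by (simp add: mset_set.remove)
    moreover have "mset ?r = add_mset (hd ?r) (mset (tl ?r))"
      using rlp_ne[of "b # zs"] by (cases ?r) auto
    moreover have "hd ?r = cnt (b # zs) zs" using cnt_tl[of "b # zs"] by simp
    ultimately have "mset (tl ?r) = image_mset (cnt (b # zs)) (mset_set (DS (b # zs) - {zs}))" by simp
    with A True show ?thesis by (simp add: Let_def \<open>hd ?r = _\<close>)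
  qed
qed simp


lemma dl_upt: "i < Suc m \<Longrightarrow> dl i [0..<Suc m] = [0..<i] @ [Suc i..<Suc m]"
  by (simp add: dl_def take_upt drop_upt)

lemma sl_compl: assumes "i < Suc m"
  shows "sorted_list_of_set ({..<Suc m} - {i}) = dl i [0..<Suc m]"
proof -
  have "set (dl i [0..<Suc m]) = {..<Suc m} - {i}" using assms by (subst dl_upt) auto
  moreover have "sorted (dl i [0..<Suc m])" "distinct (dl i [0..<Suc m])"
    using assms by (subst dl_upt, simp, force simp add: sorted_append)+
  ultimately show ?thesis by (metis sorted_list_of_set.idem_if_sorted_distinct)
qed

lemma dl_map: "dl i (map f xs) = map f (dl i xs)"
  by (simp add: dl_def take_map drop_map)

lemma length_dl: "i < length y \<Longrightarrow> length (dl i y) = length y - 1"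
  by (simp add: dl_def)

lemma nth_sl: assumes "i < Suc m" "length y = Suc m" "j < m"
  shows "y ! (sorted_list_of_set ({..<Suc m} - {i}) ! j) = dl i y ! j"
proof -
  have "dl i y = map ((!) y) (dl i [0..<Suc m])"
    using assms by (metis dl_map map_nth)
  moreover have "length (dl i [0..<Suc m]) = m" using assms by (simp add: length_dl)
  ultimately show ?thesis using assms by (simp add: sl_compl)
qed

lemma omega_cnt: assumes "length y = Suc (length x)"
  shows "omega x y = cnt y x"
proof -
  let ?m = "length x"
  let ?S = "{I. I \<subseteq> {..<length y} \<and> card I = length x \<and>
       (\<forall>j<length x. y ! (sorted_list_of_set I ! j) = x ! j)}"
  let ?f = "\<lambda>i. {..<Suc ?m} - {i}"
  have "?S = ?f ` {i. i < length y \<and> dl i y = x}"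
  proof (intro equalityI subsetI)
    fix I assume "I \<in> ?S"
    hence I: "I \<subseteq> {..<Suc ?m}" "card I = ?m" "\<forall>j<?m. y ! (sorted_list_of_set I ! j) = x ! j"
      using assms by auto
    have "card ({..<Suc ?m} - I) = 1" using I by (simp add: card_Diff_subset finite_subset)
    then obtain i where i: "{..<Suc ?m} - I = {i}" by (auto simp: card_Suc_eq)
    hence iI: "i < Suc ?m" "I = ?f i" using I(1) by auto
    have "dl i y = x"
    proof (rule nth_equalityI)
      show "length (dl i y) = length x" using assms iI by (simp add: length_dl)
      fix j assume "j < length (dl i y)"
      hence "j < ?m" using assms iI by (simp add: length_dl)
      thus "dl i y ! j = x ! j" using I(3) iI nth_sl[OF iI(1) assms] by metis
    qed
    thus "I \<in> ?f ` {i. i < length y \<and> dl i y = x}" using iI assms by auto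
  next
    fix I assume "I \<in> ?f ` {i. i < length y \<and> dl i y = x}"
    then obtain i where i: "i < Suc ?m" "dl i y = x" "I = ?f i" using assms by auto
    have "card I = ?m" using i by simp
    moreover have "\<forall>j<?m. y ! (sorted_list_of_set I ! j) = x ! j"
      using nth_sl[OF i(1) assms] i by simp
    ultimately show "I \<in> ?S" using i assms by auto
  qed
  moreover have "inj_on ?f {i. i < length y \<and> dl i y = x}"
    using assms by (auto simp: inj_on_def) 
  ultimately show ?thesis unfolding omega_def cnt_def by (simp add: card_image)
qed


lemma finite_words: "finite (words q n)"
proof -
  have "words q n = {xs. set xs \<subseteq> {..<q} \<and> length xs = n}" by (auto simp: words_def)
  thus ?thesis by (simp add: finite_lists_length_eq)
qed

lemma sum_G:
  fixes G :: "nat \<Rightarrow> real"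
  assumes G0: "G 0 = 0" and y: "y \<in> words q (Suc n)"
  shows "(\<Sum>x\<in>words q n. G (cnt y x)) = (\<Sum>i<rho y. G (rlp y ! i))"
proof -
  have yne: "y \<noteq> []" using y by (auto simp: words_def)
  have sub: "DS y \<subseteq> words q n"
  proof
    fix x assume "x \<in> DS y"
    then obtain i where i: "i < length y" "x = dl i y" by (auto simp: DS_def)
    have "set (dl i y) \<subseteq> set y" unfolding dl_def by (auto dest: in_set_takeD in_set_dropD)
    moreover have "set y \<subseteq> {..<q}" "length y = Suc n" using y by (simp_all add: words_def)
    moreover have "length (dl i y) = n" using i \<open>length y = Suc n\<close> by (simp add: length_dl)
    ultimately show "x \<in> words q n" using i unfolding words_def by blast
  qed
  have z: "cnt y x = 0" if "x \<notin> DS y" for x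
    using that unfolding cnt_def DS_def by auto
  have "(\<Sum>x\<in>words q n. G (cnt y x)) = (\<Sum>x\<in>DS y. G (cnt y x))"
    by (rule sum.mono_neutral_right[OF finite_words sub]) (auto simp: z G0)
  also have "\<dots> = sum_mset (image_mset G (image_mset (cnt y) (mset_set (DS y))))"
    by (simp add: sum_unfold_sum_mset multiset.map_comp comp_def)
  also have "\<dots> = sum_mset (image_mset G (mset (rlp y)))" by (simp add: main_mset yne)
  also have "\<dots> = sum_list (map G (rlp y))" by (metis mset_map sum_mset_sum_list)
  also have "\<dots> = (\<Sum>i<rho y. G (rlp y ! i))"
    by (simp add: sum_list_sum_nth rho_def atLeast0LessThan)
  finally show ?thesis .
qed

lemma sum_r: "(\<Sum>i<rho y. real (rlp y ! i)) = real (length y)"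
proof -
  have "(\<Sum>i<rho y. real (rlp y ! i)) = real (\<Sum>i<rho y. rlp y ! i)" by simp
  also have "(\<Sum>i<rho y. rlp y ! i) = sum_list (rlp y)"
    by (simp add: sum_list_sum_nth rho_def atLeast0LessThan)
  finally show ?thesis by (simp add: sum_rlp)
qed

lemma formula:
  assumes q: "q \<ge> 2" and y: "y \<in> words q (n + 1)"
  shows "H_ins q n 1 y = log 2 (real (n + 1))
            - 1 / real (n + 1) * (\<Sum>i<rho y. real (rlp y ! i) * log 2 (real (rlp y ! i)))"
proof -
  have y': "y \<in> words q (Suc n)" using y by simp
  have ly: "length y = Suc n" using y by (simp add: words_def)
  have om: "omega x y = cnt y x" if "x \<in> words q n" for x
    using that ly by (intro omega_cnt) (simp add: words_def)
  have ip: "ins_prob q n 1 x y = real (cnt y x) / (real (n+1) * real q)" if "x \<in> words q n" for x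
    using om[OF that] by (simp add: ins_prob_def)
  have "(\<Sum>x\<in>words q n. ins_prob q n 1 x y) = (\<Sum>x\<in>words q n. real (cnt y x) / (real (n+1) * real q))"
    by (rule sum.cong[OF refl]) (rule ip)
  also have "\<dots> = (\<Sum>x\<in>words q n. real (cnt y x)) / (real (n+1) * real q)"
    by (simp add: sum_divide_distrib)
  also have "(\<Sum>x\<in>words q n. real (cnt y x)) = real (n+1)"
    using sum_G[of real y q n] y' sum_r[of y] ly by simp
  finally have tot: "(\<Sum>x\<in>words q n. ins_prob q n 1 x y) = 1 / real q" using q by simp
  have post: "posterior q n 1 y x = real (cnt y x) / real (n+1)" if "x \<in> words q n" for x
    unfolding posterior_def tot ip[OF that] using q by simp
  define G where "G c = (let p = real c / real (n+1) in if p = 0 then 0 else - p * log 2 p)" for c :: nat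
  have "H_ins q n 1 y = (\<Sum>x\<in>words q n. G (cnt y x))"
    unfolding H_ins_def G_def by (rule sum.cong[OF refl]) (subst post, assumption, rule refl)
  also have "\<dots> = (\<Sum>i<rho y. G (rlp y ! i))" by (rule sum_G) (simp_all add: G_def y')
  also have "\<dots> = (\<Sum>i<rho y. real (rlp y ! i) / real (n+1) * log 2 (real (n+1))
       - 1 / real (n+1) * (real (rlp y ! i) * log 2 (real (rlp y ! i))))"
  proof (rule sum.cong)
    fix i
    show "G (rlp y ! i) = real (rlp y ! i) / real (n+1) * log 2 (real (n+1))
       - 1 / real (n+1) * (real (rlp y ! i) * log 2 (real (rlp y ! i)))"
    proof (cases "rlp y ! i = 0")
      case False
      define c where "c = real (rlp y ! i)"
      define N where "N = real (n+1)"
      have cp: "c > 0" "N > 0" using False by (auto simp: c_def N_def)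
      have l: "log 2 (c / N) = log 2 c - log 2 N" using cp by (simp add: log_divide)
      have "G (rlp y ! i) = - (c / N) * log 2 (c / N)"
        unfolding G_def Let_def c_def N_def using False by simp
      also have "\<dots> = c / N * log 2 N - 1 / N * (c * log 2 c)"
        unfolding l right_diff_distrib by simp
      finally show ?thesis unfolding c_def N_def .
    qed (simp add: G_def)
  qed simp
  also have "\<dots> = log 2 (real (n+1)) * ((\<Sum>i<rho y. real (rlp y ! i)) / real (n+1))
      - 1 / real (n+1) * (\<Sum>i<rho y. real (rlp y ! i) * log 2 (real (rlp y ! i)))"
  proof -
    have e1: "(\<Sum>i<rho y. real (rlp y ! i) / real (n+1) * log 2 (real (n+1)))
        = log 2 (real (n+1)) * ((\<Sum>i<rho y. real (rlp y ! i)) / real (n+1))"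
      by (simp add: sum_distrib_left sum_divide_distrib mult.commute)
    have e2: "(\<Sum>i<rho y. 1 / real (n+1) * (real (rlp y ! i) * log 2 (real (rlp y ! i))))
        = 1 / real (n+1) * (\<Sum>i<rho y. real (rlp y ! i) * log 2 (real (rlp y ! i)))"
      by (rule sum_distrib_left[symmetric])
    show ?thesis by (simp only: sum_subtractf e1 e2)
  qed
  also have "(\<Sum>i<rho y. real (rlp y ! i)) / real (n+1) = 1" using sum_r[of y] ly by simp
  finally show ?thesis by simp
qed

theorem theorem2:
  fixes q n :: nat and y :: "nat list"
  assumes "q \<ge> 2" and "n \<ge> 1" and "y \<in> words q (n + 1)"
  shows "(\<forall>y'\<in>words q (n + 1). mset (rlp y') = mset (rlp y) \<longrightarrow> H_ins q n 1 y' = H_ins q n 1 y)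
       \<and> H_ins q n 1 y = log 2 (real (n + 1))
            - 1 / real (n + 1) * (\<Sum>i<rho y. real (rlp y ! i) * log 2 (real (rlp y ! i)))"
proof
  have gen: "(\<Sum>i<rho z. real (rlp z ! i) * log 2 (real (rlp z ! i)))
      = sum_mset (image_mset (\<lambda>r. real r * log 2 (real r)) (mset (rlp z)))" for z :: "nat list"
  proof -
    have "sum_mset (image_mset (\<lambda>r. real r * log 2 (real r)) (mset (rlp z)))
        = sum_list (map (\<lambda>r. real r * log 2 (real r)) (rlp z))"
      by (metis mset_map sum_mset_sum_list)
    thus ?thesis by (simp add: sum_list_sum_nth rho_def atLeast0LessThan)
  qed
  show "\<forall>y'\<in>words q (n + 1). mset (rlp y') = mset (rlp y) \<longrightarrow> H_ins q n 1 y' = H_ins q n 1 y"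
  proof (intro ballI impI)
    fix y' assume a: "y' \<in> words q (n + 1)" "mset (rlp y') = mset (rlp y)"
    show "H_ins q n 1 y' = H_ins q n 1 y"
      by (simp only: formula[OF assms(1) a(1)] formula[OF assms(1,3)] gen a(2))
  qed
qed (rule formula[OF assms(1,3)])

end
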